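(* Let $\varphi:\Sigma\to I$ depend only on finitely many coordinates of $\omega$, and suppose its graph $\Gamma$ drifts up (resp. down). For $n\ge0$ let $\varphi_n$ be the function whose graph is $F^n(\Gamma)$, i.e. $\varphi_n(\omega)=f_{\omega_{-1}}\circ\dots\circ f_{\omega_{-n}}(\varphi(\sigma^{-n}\omega))$. Then: (1) the pointwise limit $\varphi_{+\infty}(\omega)=\lim_{n\to+\infty}\varphi_n(\omega)$ exists for every $\omega$ and defines a measurable function $\varphi_{+\infty}:\Sigma\to I$; (2) $\varphi_{+\infty}(\omega)$ does not depend on the future of $\omega$: if $\omega_j=\omega'_j$ for all $j\le-1$ then $\varphi_{+\infty}(\omega)=\varphi_{+\infty}(\omega')$; (3) $\varphi_{+\infty}$ is $F$-invariant: $\varphi_{+\infty}(\sigma\omega)=f_{\omega_0}(\varphi_{+\infty}(\omega))$.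
   Context: $\Sigma$: two-sided transitive subshift of finite type over $\{1,\dots,N\}$ with left shift $\sigma$, $(\sigma\omega)_n=\omega_{n+1}$. $I=[0,1]$; $F(\omega,x)=(\sigma\omega,f_{\omega_0}(x))$ with $f_k:I\to I$ strictly increasing $C^1$ diffeomorphisms onto their images. For functions $\psi_1,\psi_2:\Sigma\to I$, $\psi_1<\psi_2$ means $\psi_1(\omega)<\psi_2(\omega)$ for all $\omega$; the same notation is used for their graphs. $F(\Gamma)$ is again the graph of a function; the graph $\Gamma$ drifts up (down) if $F(\Gamma)>\Gamma$ (resp. $F(\Gamma)<\Gamma$). *)

theory Defs
  imports "HOL-Analysis.Analysis" "HOL-Probability.Probability"
begin

text \<open>Two-sided sequences over the alphabet {1..N} are functions int => nat.\<close>

definition shift :: "(int \<Rightarrow> nat) \<Rightarrow> (int \<Rightarrow> nat)" where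
  "shift \<omega> = (\<lambda>n. \<omega> (n + 1))"

definition shift_inv :: "(int \<Rightarrow> nat) \<Rightarrow> (int \<Rightarrow> nat)" where
  "shift_inv \<omega> = (\<lambda>n. \<omega> (n - 1))"

definition is_SFT :: "nat \<Rightarrow> (int \<Rightarrow> nat) set \<Rightarrow> bool" where
  "is_SFT N Sig \<longleftrightarrow> (\<exists>L W. finite W \<and> (\<forall>w\<in>W. length w = L) \<and>
      Sig = {\<omega>. (\<forall>n. \<omega> n \<in> {1..N}) \<and> (\<forall>n. map (\<lambda>i. \<omega> (n + int i)) [0..<L] \<in> W)})"

definition shift_transitive :: "(int \<Rightarrow> nat) set \<Rightarrow> bool" where
  "shift_transitive Sig \<longleftrightarrow> (\<forall>\<omega>1\<in>Sig. \<forall>\<omega>2\<in>Sig. \<forall>m::nat. \<exists>\<omega>\<in>Sig. \<exists>k::nat.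
      (\<forall>j. \<bar>j\<bar> \<le> int m \<longrightarrow> \<omega> j = \<omega>1 j) \<and>
      (\<forall>j. \<bar>j\<bar> \<le> int m \<longrightarrow> \<omega> (j + int k) = \<omega>2 j))"

definition Sigma_space :: "(int \<Rightarrow> nat) set \<Rightarrow> (int \<Rightarrow> nat) measure" where
  "Sigma_space Sig = restrict_space (Pi\<^sub>M UNIV (\<lambda>_::int. count_space (UNIV::nat set))) Sig"

text \<open>phi_n: the function whose graph is F^n(Gamma).
  phi_n(w) = f_{w_{-1}} o ... o f_{w_{-n}} (phi(shift^{-n} w)).\<close>
fun iter_graph :: "(nat \<Rightarrow> real \<Rightarrow> real) \<Rightarrow> ((int \<Rightarrow> nat) \<Rightarrow> real) \<Rightarrow> nat \<Rightarrow> (int \<Rightarrow> nat) \<Rightarrow> real" where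
  "iter_graph f \<phi> 0 \<omega> = \<phi> \<omega>"
| "iter_graph f \<phi> (Suc n) \<omega> = f (\<omega> (-1)) (iter_graph f \<phi> n (shift_inv \<omega>))"

end

theory Submission
  imports Defs
begin

lemma meas_cyl:
  fixes J :: "int set" and x :: "int \<Rightarrow> nat" and c :: real
  assumes "finite J"
  shows "(\<lambda>\<omega>::int\<Rightarrow>nat. if (\<forall>j\<in>J. \<omega> j = x j) then c else 0) \<in> borel_measurable (Sigma_space Sig)"
  unfolding Sigma_space_def
  apply (rule measurable_restrict_space1)
  using assms by measurable

lemma space_Sigma_space: "space (Sigma_space Sig) = Sig"
  unfolding Sigma_space_def by (simp add: space_restrict_space space_PiM)

lemma meas_finite_dep:
  fixes g :: "(int \<Rightarrow> nat) \<Rightarrow> real"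
  assumes J: "finite J" and rng: "\<And>\<omega> n. \<omega> \<in> Sig \<Longrightarrow> \<omega> n \<in> {1..N}"
    and dep: "\<And>\<omega> \<omega>'. \<omega> \<in> Sig \<Longrightarrow> \<omega>' \<in> Sig \<Longrightarrow> (\<forall>j\<in>J. \<omega> j = \<omega>' j) \<Longrightarrow> g \<omega> = g \<omega>'"
  shows "g \<in> borel_measurable (Sigma_space Sig)"
proof -
  define X where "X = (\<lambda>\<omega>. restrict \<omega> J) ` Sig"
  have "X \<subseteq> PiE J (\<lambda>_. {1..N})" unfolding X_def using rng by auto
  hence finX: "finite X" using J by (meson finite_PiE finite_atLeastAtMost finite_subset)
  define c where "c x = g (SOME \<omega>. \<omega> \<in> Sig \<and> restrict \<omega> J = x)" for x
  define h where "h \<omega> = (\<Sum>x\<in>X. (if (\<forall>j\<in>J. \<omega> j = x j) then c x else 0))" for \<omega>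
  have hm: "h \<in> borel_measurable (Sigma_space Sig)"
    unfolding h_def by (rule borel_measurable_sum, rule meas_cyl[OF J])
  have "g \<omega> = h \<omega>" if w: "\<omega> \<in> Sig" for \<omega>
  proof -
    have "h \<omega> = (\<Sum>x\<in>X. (if x = restrict \<omega> J then c x else 0))"
      unfolding h_def
    proof (rule sum.cong)
      fix x assume "x \<in> X"
      then obtain \<omega>0 where "x = restrict \<omega>0 J" unfolding X_def by auto
      hence "(\<forall>j\<in>J. \<omega> j = x j) = (x = restrict \<omega> J)" by (auto simp: restrict_def fun_eq_iff)
      thus "(if \<forall>j\<in>J. \<omega> j = x j then c x else 0) = (if x = restrict \<omega> J then c x else 0)" by simp
    qed simp
    also have "\<dots> = c (restrict \<omega> J)" using finX w unfolding X_def by (simp add: sum.delta')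
    also have "\<dots> = g \<omega>"
    proof -
      have ex: "\<exists>\<omega>'. \<omega>' \<in> Sig \<and> restrict \<omega>' J = restrict \<omega> J" using w by blast
      define \<omega>' where "\<omega>' = (SOME \<omega>'. \<omega>' \<in> Sig \<and> restrict \<omega>' J = restrict \<omega> J)"
      have "\<omega>' \<in> Sig \<and> restrict \<omega>' J = restrict \<omega> J" unfolding \<omega>'_def by (rule someI_ex[OF ex])
      hence "g \<omega>' = g \<omega>" using dep[of \<omega>' \<omega>] w by (metis restrict_apply')
      thus ?thesis unfolding c_def \<omega>'_def by simp
    qed
    finally show ?thesis by simp
  qed
  thus ?thesis using hm measurable_cong[of "Sigma_space Sig" g h] by (simp add: space_Sigma_space)
qed

theorem mainTheorem13:
  fixes N :: nat and Sig :: "(int \<Rightarrow> nat) set"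
    and f :: "nat \<Rightarrow> real \<Rightarrow> real" and f' :: "nat \<Rightarrow> real \<Rightarrow> real"
    and \<phi> :: "(int \<Rightarrow> nat) \<Rightarrow> real"
  assumes SFT: "is_SFT N Sig"
    and trans: "shift_transitive Sig"
    and f_into: "\<And>k. k \<in> {1..N} \<Longrightarrow> f k ` {0..1} \<subseteq> {0..1}"
    and f_mono: "\<And>k. k \<in> {1..N} \<Longrightarrow> strict_mono_on {0..1} (f k)"
    and f_deriv: "\<And>k x. k \<in> {1..N} \<Longrightarrow> x \<in> {0..1} \<Longrightarrow>
                    (f k has_real_derivative f' k x) (at x within {0..1})"
    and f'_cont: "\<And>k. k \<in> {1..N} \<Longrightarrow> continuous_on {0..1} (f' k)"
    and f'_pos: "\<And>k x. k \<in> {1..N} \<Longrightarrow> x \<in> {0..1} \<Longrightarrow> f' k x > 0"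
    and phi_range: "\<And>\<omega>. \<omega> \<in> Sig \<Longrightarrow> \<phi> \<omega> \<in> {0..1}"
    and phi_finite: "\<exists>M::nat. \<forall>\<omega>\<in>Sig. \<forall>\<omega>'\<in>Sig.
                       (\<forall>j. \<bar>j\<bar> \<le> int M \<longrightarrow> \<omega> j = \<omega>' j) \<longrightarrow> \<phi> \<omega> = \<phi> \<omega>'"
    and drift: "(\<forall>\<omega>\<in>Sig. iter_graph f \<phi> 1 \<omega> > \<phi> \<omega>) \<or>
                (\<forall>\<omega>\<in>Sig. iter_graph f \<phi> 1 \<omega> < \<phi> \<omega>)"
  shows "\<exists>\<psi> :: (int \<Rightarrow> nat) \<Rightarrow> real.
           (\<forall>\<omega>\<in>Sig. (\<lambda>n. iter_graph f \<phi> n \<omega>) \<longlonglongrightarrow> \<psi> \<omega>)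
         \<and> (\<forall>\<omega>\<in>Sig. \<psi> \<omega> \<in> {0..1})
         \<and> \<psi> \<in> borel_measurable (Sigma_space Sig)
         \<and> (\<forall>\<omega>\<in>Sig. \<forall>\<omega>'\<in>Sig. (\<forall>j\<le>-1. \<omega> j = \<omega>' j) \<longrightarrow> \<psi> \<omega> = \<psi> \<omega>')
         \<and> (\<forall>\<omega>\<in>Sig. \<psi> (shift \<omega>) = f (\<omega> 0) (\<psi> \<omega>))"
proof -
  let ?it = "iter_graph f \<phi>"
  obtain M :: nat where M: "\<And>\<omega> \<omega>'. \<omega>\<in>Sig \<Longrightarrow> \<omega>'\<in>Sig \<Longrightarrow>
      (\<forall>j. \<bar>j\<bar> \<le> int M \<longrightarrow> \<omega> j = \<omega>' j) \<Longrightarrow> \<phi> \<omega> = \<phi> \<omega>'" using phi_finite by blast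
  obtain L W where SigE: "Sig = {\<omega>. (\<forall>n. \<omega> n \<in> {1..N}) \<and> (\<forall>n. map (\<lambda>i. \<omega> (n + int i)) [0..<L] \<in> W)}"
    using SFT unfolding is_SFT_def by blast
  have rng: "\<And>\<omega> n. \<omega> \<in> Sig \<Longrightarrow> \<omega> n \<in> {1..N}" using SigE by blast
  have si: "shift_inv \<omega> \<in> Sig" if "\<omega> \<in> Sig" for \<omega>
  proof -
    have "map (\<lambda>i. \<omega> (n - 1 + int i)) [0..<L] \<in> W" for n using that SigE by blast
    moreover have "\<omega> (n - 1) \<in> {1..N}" for n using that SigE by blast
    ultimately show ?thesis unfolding SigE shift_inv_def by (simp add: algebra_simps)
  qed
  have sh: "shift \<omega> \<in> Sig" if "\<omega> \<in> Sig" for \<omega>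
  proof -
    have "map (\<lambda>i. \<omega> (n + 1 + int i)) [0..<L] \<in> W" for n using that SigE by blast
    moreover have "\<omega> (n + 1) \<in> {1..N}" for n using that SigE by blast
    ultimately show ?thesis unfolding SigE shift_def by (simp add: algebra_simps)
  qed
  have itr: "?it n \<omega> \<in> {0..1}" if "\<omega> \<in> Sig" for n \<omega>
    using that
  proof (induction n arbitrary: \<omega>)
    case 0 then show ?case using phi_range by simp
  next
    case (Suc n)
    have "?it n (shift_inv \<omega>) \<in> {0..1}" using Suc si by blast
    hence "f (\<omega> (-1)) (?it n (shift_inv \<omega>)) \<in> {0..1}" using f_into[OF rng[OF Suc.prems, of "-1"]] by blast
    thus ?case by simp
  qed
  have mono: "monoseq (\<lambda>n. ?it n \<omega>)" if w: "\<omega> \<in> Sig" for \<omega>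
  proof (cases "\<forall>\<omega>\<in>Sig. iter_graph f \<phi> 1 \<omega> > \<phi> \<omega>")
    case True
    have "?it n \<omega> < ?it (Suc n) \<omega>" if "\<omega> \<in> Sig" for n \<omega>
      using that
    proof (induction n arbitrary: \<omega>)
      case 0 then show ?case using True by simp
    next
      case (Suc n)
      have lt: "?it n (shift_inv \<omega>) < ?it (Suc n) (shift_inv \<omega>)" using Suc si by blast
      have "f (\<omega> (-1)) (?it n (shift_inv \<omega>)) < f (\<omega> (-1)) (?it (Suc n) (shift_inv \<omega>))"
        by (rule strict_mono_onD[OF f_mono[OF rng[OF Suc.prems, of "-1"]]])
           (use itr[OF si[OF Suc.prems], of n] itr[OF si[OF Suc.prems], of "Suc n"] lt in \<open>auto simp del: iter_graph.simps\<close>)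
      thus ?case by (simp only: iter_graph.simps)
    qed
    thus ?thesis using w unfolding monoseq_Suc by (simp add: less_imp_le)
  next
    case False
    hence D: "\<forall>\<omega>\<in>Sig. iter_graph f \<phi> 1 \<omega> < \<phi> \<omega>" using drift by blast
    have "?it (Suc n) \<omega> < ?it n \<omega>" if "\<omega> \<in> Sig" for n \<omega>
      using that
    proof (induction n arbitrary: \<omega>)
      case 0 then show ?case using D by simp
    next
      case (Suc n)
      have lt: "?it (Suc n) (shift_inv \<omega>) < ?it n (shift_inv \<omega>)" using Suc si by blast
      have "f (\<omega> (-1)) (?it (Suc n) (shift_inv \<omega>)) < f (\<omega> (-1)) (?it n (shift_inv \<omega>))"
        by (rule strict_mono_onD[OF f_mono[OF rng[OF Suc.prems, of "-1"]]])
           (use itr[OF si[OF Suc.prems], of n] itr[OF si[OF Suc.prems], of "Suc n"] lt in \<open>auto simp del: iter_graph.simps\<close>)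
      thus ?case by (simp only: iter_graph.simps)
    qed
    thus ?thesis using w unfolding monoseq_Suc by (simp add: less_imp_le)
  qed
  define \<psi> where "\<psi> \<omega> = lim (\<lambda>n. ?it n \<omega>)" for \<omega>
  have conv: "(\<lambda>n. ?it n \<omega>) \<longlonglongrightarrow> \<psi> \<omega>" if w: "\<omega> \<in> Sig" for \<omega>
  proof -
    have "Bseq (\<lambda>n. ?it n \<omega>)"
      by (rule BseqI[of 1]) (use itr w in auto)
    hence "convergent (\<lambda>n. ?it n \<omega>)" using Bseq_monoseq_convergent mono w by blast
    thus ?thesis unfolding \<psi>_def by (simp add: convergent_LIMSEQ_iff)
  qed
  have psir: "\<psi> \<omega> \<in> {0..1}" if w: "\<omega> \<in> Sig" for \<omega>
  proof -
    have "\<psi> \<omega> \<le> 1" by (rule LIMSEQ_le_const2[OF conv[OF w]]) (use itr w in auto)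
    moreover have "0 \<le> \<psi> \<omega>" by (rule LIMSEQ_le_const[OF conv[OF w]]) (use itr w in auto)
    ultimately show ?thesis by simp
  qed
  have dep: "\<And>\<omega> \<omega>'. \<omega> \<in> Sig \<Longrightarrow> \<omega>' \<in> Sig \<Longrightarrow>
      (\<forall>j\<in>{- int n - int M .. int M + int n}. \<omega> j = \<omega>' j) \<Longrightarrow> ?it n \<omega> = ?it n \<omega>'" for n
  proof (induction n)
    case 0
    have "\<forall>j. \<bar>j\<bar> \<le> int M \<longrightarrow> \<omega> j = \<omega>' j"
    proof (intro allI impI)
      fix j :: int assume "\<bar>j\<bar> \<le> int M"
      hence "j \<in> {- int 0 - int M .. int M + int 0}" by auto
      thus "\<omega> j = \<omega>' j" using 0 by blast
    qed
    then show ?case using M[of \<omega> \<omega>'] 0 by simp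
  next
    case (Suc n)
    have "?it n (shift_inv \<omega>) = ?it n (shift_inv \<omega>')"
    proof (rule Suc.IH)
      show "shift_inv \<omega> \<in> Sig" "shift_inv \<omega>' \<in> Sig" using Suc.prems si by blast+
      show "\<forall>j\<in>{- int n - int M..int M + int n}. shift_inv \<omega> j = shift_inv \<omega>' j"
      proof
        fix j assume "j \<in> {- int n - int M..int M + int n}"
        hence "j - 1 \<in> {- int (Suc n) - int M..int M + int (Suc n)}" by auto
        thus "shift_inv \<omega> j = shift_inv \<omega>' j" using Suc.prems(3) unfolding shift_inv_def by blast
      qed
    qed
    moreover have "\<omega> (-1) = \<omega>' (-1)" using Suc.prems(3) by auto
    ultimately show ?case by simp
  qed
  have fut: "\<And>\<omega> \<omega>' K. \<omega> \<in> Sig \<Longrightarrow> \<omega>' \<in> Sig \<Longrightarrow> K \<ge> -1 \<Longrightarrow> K \<ge> int M - int n \<Longrightarrow>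
      (\<forall>j\<le>K. \<omega> j = \<omega>' j) \<Longrightarrow> ?it n \<omega> = ?it n \<omega>'" for n
  proof (induction n)
    case 0
    have "\<forall>j. \<bar>j\<bar> \<le> int M \<longrightarrow> \<omega> j = \<omega>' j" using 0 by auto
    then show ?case using M[of \<omega> \<omega>'] 0 by simp
  next
    case (Suc n)
    have "?it n (shift_inv \<omega>) = ?it n (shift_inv \<omega>')"
    proof (rule Suc.IH[of _ _ "K+1"])
      show "shift_inv \<omega> \<in> Sig" "shift_inv \<omega>' \<in> Sig" using Suc.prems si by blast+
      show "K + 1 \<ge> -1" "K + 1 \<ge> int M - int n" using Suc.prems(3,4) by auto
      show "\<forall>j\<le>K+1. shift_inv \<omega> j = shift_inv \<omega>' j"
        using Suc.prems(5) unfolding shift_inv_def by auto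
    qed
    moreover have "\<omega> (-1) = \<omega>' (-1)" using Suc.prems by auto
    ultimately show ?case by simp
  qed
  have meas: "\<psi> \<in> borel_measurable (Sigma_space Sig)"
  proof (rule borel_measurable_LIMSEQ_real[where u = "\<lambda>n. ?it n"])
    fix x assume "x \<in> space (Sigma_space Sig)"
    thus "(\<lambda>i. ?it i x) \<longlonglongrightarrow> \<psi> x" using conv by (simp add: space_Sigma_space)
  next
    fix n show "?it n \<in> borel_measurable (Sigma_space Sig)"
      by (rule meas_finite_dep[where J = "{- int n - int M .. int M + int n}" and N = N])
         (simp, use rng in blast, rule dep)
  qed
  have futp: "\<psi> \<omega> = \<psi> \<omega>'" if w: "\<omega> \<in> Sig" "\<omega>' \<in> Sig" "\<forall>j\<le>-1. \<omega> j = \<omega>' j" for \<omega> \<omega>'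
  proof -
    have "(\<lambda>n. ?it (n + (M+1)) \<omega>) = (\<lambda>n. ?it (n + (M+1)) \<omega>')"
    proof
      fix n
      show "?it (n + (M+1)) \<omega> = ?it (n + (M+1)) \<omega>'"
        by (rule fut[of \<omega> \<omega>' "-1"]) (use w in auto)
    qed
    moreover have "(\<lambda>n. ?it (n + (M+1)) \<omega>) \<longlonglongrightarrow> \<psi> \<omega>" using conv[OF w(1)] LIMSEQ_ignore_initial_segment by blast
    moreover have "(\<lambda>n. ?it (n + (M+1)) \<omega>') \<longlonglongrightarrow> \<psi> \<omega>'" using conv[OF w(2)] LIMSEQ_ignore_initial_segment by blast
    ultimately show ?thesis using LIMSEQ_unique by metis
  qed
  have inv: "\<psi> (shift \<omega>) = f (\<omega> 0) (\<psi> \<omega>)" if w: "\<omega> \<in> Sig" for \<omega>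
  proof -
    have k: "\<omega> 0 \<in> {1..N}" using rng w by blast
    have cont: "continuous_on {0..1} (f (\<omega> 0))"
      unfolding continuous_on_eq_continuous_within
      using f_deriv[OF k] DERIV_continuous by blast
    have ss: "shift_inv (shift \<omega>) = \<omega>" by (simp add: shift_def shift_inv_def)
    have "(\<lambda>n. ?it (Suc n) (shift \<omega>)) \<longlonglongrightarrow> \<psi> (shift \<omega>)"
      using conv[OF sh[OF w]] LIMSEQ_Suc by blast
    moreover have "(\<lambda>n. ?it (Suc n) (shift \<omega>)) = (\<lambda>n. f (\<omega> 0) (?it n \<omega>))"
    proof
      fix n
      have "shift \<omega> (-1) = \<omega> 0" by (simp add: shift_def)
      thus "?it (Suc n) (shift \<omega>) = f (\<omega> 0) (?it n \<omega>)" by (simp only: iter_graph.simps ss)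
    qed
    ultimately have A: "(\<lambda>n. f (\<omega> 0) (?it n \<omega>)) \<longlonglongrightarrow> \<psi> (shift \<omega>)" by (simp only:)
    have B: "(\<lambda>n. f (\<omega> 0) (?it n \<omega>)) \<longlonglongrightarrow> f (\<omega> 0) (\<psi> \<omega>)"
      using continuous_on_tendsto_compose[OF cont conv[OF w] psir[OF w]] itr w by (simp add: o_def)
    show ?thesis using LIMSEQ_unique[OF A B] .
  qed
  show ?thesis
    apply (rule exI[of _ \<psi>])
    apply (intro conjI ballI impI allI)
    subgoal using conv by blast
    subgoal using psir by blast
    subgoal using meas by blast
    subgoal using futp by blast
    subgoal using inv by blast
    done
qed

end
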